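(* Let $0<a<1$, $0<b<1$ and $\epsilon>0$, and let $I\in\mathbb{R}$ and $\gamma\ge 0$. Consider the system \begin{align*} \dot y_A &= y_A-\tfrac{y_A^3}{3}-a-z_A+I, & \dot z_A &= \epsilon(y_A-bz_A),\\ \dot y_B &= y_B-\tfrac{y_B^3}{3}-a-z_B+\gamma(y_A-y_B), & \dot z_B &= \epsilon(y_B-bz_B). \end{align*} Then for every fixed $I$ and $\gamma$ the system has a unique equilibrium point $\mathbf{p}_*=(y_{A*},z_{A*},y_{B*},z_{B*})$. Define $$\sigma_1(I,\gamma)=1-b\epsilon-y_{A*}^2,\qquad \sigma_2(I,\gamma)=1-b\epsilon-\gamma-y_{B*}^2.$$ Then: (1) $\mathbf{p}_*$ is nonhyperbolic if $\sigma_1(I,\gamma)=0$ or $\sigma_2(I,\gamma)=0$; (2) $\mathbf{p}_*$ is hyperbolic if $\sigma_1(I,\gamma)\neq 0$ and $\sigma_2(I,\gamma)\neq 0$; in that case $\mathbf{p}_*$ is attracting if $\sigma_1<0$ and $\sigma_2<0$, repelling if $\sigma_1>0$ and $\sigma_2>0$, and a saddle if $\sigma_1\sigma_2<0$.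
   Context: This is the directed (unidirectionally coupled) two-FitzHugh–Nagumo system: neuron $A$ receives external input $I$, neuron $B$ receives no input and is coupled from $A$ with coupling strength $\gamma$. The paper's standing assumption (Assumption 1) is that the parameters are such that a single FitzHugh–Nagumo neuron $\dot y=y-y^3/3-a-z+I$, $\dot z=\epsilon(y-bz)$ has a unique equilibrium for all $I\ge 0$, which the paper states amounts to $0<a<1$ and $0<b<1$; $\epsilon$ is a small positive timescale separation constant. *)

theory Defs
  imports "HOL-Analysis.Analysis"
begin

text \<open>State vector p = (y_A, z_A, y_B, z_B) in real^4, components p$1, p$2, p$3, p$4.\<close>

definition fn2_field :: "real \<Rightarrow> real \<Rightarrow> real \<Rightarrow> real \<Rightarrow> real \<Rightarrow> real^4 \<Rightarrow> real^4" where
  "fn2_field a b \<epsilon> I \<gamma> p =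
     vector [ p$1 - (p$1)^3/3 - a - p$2 + I,
              \<epsilon> * (p$1 - b * p$2),
              p$3 - (p$3)^3/3 - a - p$4 + \<gamma> * (p$1 - p$3),
              \<epsilon> * (p$3 - b * p$4) ]"

definition jacobian_at :: "(real^'n \<Rightarrow> real^'n) \<Rightarrow> real^'n \<Rightarrow> real^'n^'n" where
  "jacobian_at F p = matrix (frechet_derivative F (at p))"

definition real_mat_eigenvalue :: "real^'n^'n \<Rightarrow> complex \<Rightarrow> bool" where
  "real_mat_eigenvalue A c \<longleftrightarrow>
     (\<exists>v :: complex^'n. v \<noteq> 0 \<and> (\<chi> i j. complex_of_real (A $ i $ j)) *v v = c *s v)"

definition equilibrium :: "(real^'n \<Rightarrow> real^'n) \<Rightarrow> real^'n \<Rightarrow> bool" where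
  "equilibrium F p \<longleftrightarrow> F p = 0"

definition hyperbolic_eq :: "(real^'n \<Rightarrow> real^'n) \<Rightarrow> real^'n \<Rightarrow> bool" where
  "hyperbolic_eq F p \<longleftrightarrow> equilibrium F p \<and> F differentiable (at p) \<and>
     (\<forall>c. real_mat_eigenvalue (jacobian_at F p) c \<longrightarrow> Re c \<noteq> 0)"

definition nonhyperbolic_eq :: "(real^'n \<Rightarrow> real^'n) \<Rightarrow> real^'n \<Rightarrow> bool" where
  "nonhyperbolic_eq F p \<longleftrightarrow> equilibrium F p \<and> F differentiable (at p) \<and>
     (\<exists>c. real_mat_eigenvalue (jacobian_at F p) c \<and> Re c = 0)"

definition attracting_eq :: "(real^'n \<Rightarrow> real^'n) \<Rightarrow> real^'n \<Rightarrow> bool" where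
  "attracting_eq F p \<longleftrightarrow> equilibrium F p \<and> F differentiable (at p) \<and>
     (\<forall>c. real_mat_eigenvalue (jacobian_at F p) c \<longrightarrow> Re c < 0)"

definition repelling_eq :: "(real^'n \<Rightarrow> real^'n) \<Rightarrow> real^'n \<Rightarrow> bool" where
  "repelling_eq F p \<longleftrightarrow> equilibrium F p \<and> F differentiable (at p) \<and>
     (\<forall>c. real_mat_eigenvalue (jacobian_at F p) c \<longrightarrow> Re c > 0)"

definition saddle_eq :: "(real^'n \<Rightarrow> real^'n) \<Rightarrow> real^'n \<Rightarrow> bool" where
  "saddle_eq F p \<longleftrightarrow> hyperbolic_eq F p \<and>
     (\<exists>c. real_mat_eigenvalue (jacobian_at F p) c \<and> Re c < 0) \<and>
     (\<exists>c. real_mat_eigenvalue (jacobian_at F p) c \<and> Re c > 0)"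

end

theory Submission
  imports Defs
begin

lemma vector_4 [simp]:
 "(vector [x,y,z,w] ::('a::zero)^4)$1 = x"
 "(vector [x,y,z,w] ::('a::zero)^4)$2 = y"
 "(vector [x,y,z,w] ::('a::zero)^4)$3 = z"
 "(vector [x,y,z,w] ::('a::zero)^4)$4 = w"
  unfolding vector_def by simp_all

lemma vn[derivative_intros]: "((\<lambda>x. x $ i) has_derivative (\<lambda>h. h $ i)) F"
  by (rule bounded_linear_imp_has_derivative) (rule bounded_linear_vec_nth)

definition JL :: "real \<Rightarrow> real \<Rightarrow> real \<Rightarrow> real^4 \<Rightarrow> real^4 \<Rightarrow> real^4" where
 "JL b \<epsilon> \<gamma> p h = vector [(1 - (p$1)^2) * h$1 - h$2, \<epsilon> * (h$1 - b * h$2),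
    \<gamma> * h$1 + (1 - \<gamma> - (p$3)^2) * h$3 - h$4, \<epsilon> * (h$3 - b * h$4)]"

lemma deriv: "(fn2_field a b \<epsilon> I \<gamma> has_derivative JL b \<epsilon> \<gamma> p) (at p)"
proof (subst has_derivative_componentwise_within, intro ballI)
  fix i :: "real^4" assume "i \<in> Basis"
  then obtain k where k: "i = axis k 1" by (auto simp: Basis_vec_def)
  show "((\<lambda>x. fn2_field a b \<epsilon> I \<gamma> x \<bullet> i) has_derivative (\<lambda>x. JL b \<epsilon> \<gamma> p x \<bullet> i)) (at p)"
    unfolding k inner_axis fn2_field_def JL_def
    using exhaust_4[of k]
    apply (elim disjE; simp)
    by (rule derivative_eq_intros refl | rule ext | simp add: power2_eq_square algebra_simps)+
qed

lemma jac: "jacobian_at (fn2_field a b \<epsilon> I \<gamma>) p = matrix (JL b \<epsilon> \<gamma> p)"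
  unfolding jacobian_at_def using frechet_derivative_at[OF deriv] by metis

lemma eig_core: "((\<chi> i j. complex_of_real (matrix (JL b \<epsilon> \<gamma> p) $ i $ j)) *v v = c *s v) \<longleftrightarrow>
     (of_real (1 - (p$1)^2) * v$1 - v$2 = c * v$1 \<and> of_real \<epsilon> * (v$1 - of_real b * v$2) = c * v$2 \<and>
     of_real \<gamma> * v$1 + of_real (1 - \<gamma> - (p$3)^2) * v$3 - v$4 = c * v$3 \<and> of_real \<epsilon> * (v$3 - of_real b * v$4) = c * v$4)"
  by (simp add: vec_eq_iff forall_4 matrix_def JL_def matrix_vector_mult_def sum_4 axis_def right_diff_distrib mult.assoc)

lemma eig_iff: "real_mat_eigenvalue (jacobian_at (fn2_field a b \<epsilon> I \<gamma>) p) c \<longleftrightarrow>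
  (\<exists>v1 v2 v3 v4 :: complex. (v1 \<noteq> 0 \<or> v2 \<noteq> 0 \<or> v3 \<noteq> 0 \<or> v4 \<noteq> 0) \<and>
     of_real (1 - (p$1)^2) * v1 - v2 = c * v1 \<and> of_real \<epsilon> * (v1 - of_real b * v2) = c * v2 \<and>
     of_real \<gamma> * v1 + of_real (1 - \<gamma> - (p$3)^2) * v3 - v4 = c * v3 \<and> of_real \<epsilon> * (v3 - of_real b * v4) = c * v4)"
  (is "?L \<longleftrightarrow> ?R")
proof
  assume ?L
  then obtain v where "v \<noteq> 0" and e: "(\<chi> i j. complex_of_real (matrix (JL b \<epsilon> \<gamma> p) $ i $ j)) *v v = c *s v"
    unfolding jac real_mat_eigenvalue_def by blast
  have "v$1 \<noteq> 0 \<or> v$2 \<noteq> 0 \<or> v$3 \<noteq> 0 \<or> v$4 \<noteq> 0"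
    using \<open>v \<noteq> 0\<close> by (auto simp: vec_eq_iff forall_4)
  then show ?R using e unfolding eig_core by blast
next
  assume ?R
  then obtain v1 v2 v3 v4 :: complex where h: "(v1 \<noteq> 0 \<or> v2 \<noteq> 0 \<or> v3 \<noteq> 0 \<or> v4 \<noteq> 0) \<and>
     of_real (1 - (p$1)^2) * v1 - v2 = c * v1 \<and> of_real \<epsilon> * (v1 - of_real b * v2) = c * v2 \<and>
     of_real \<gamma> * v1 + of_real (1 - \<gamma> - (p$3)^2) * v3 - v4 = c * v3 \<and> of_real \<epsilon> * (v3 - of_real b * v4) = c * v4"
    by blast
  define v :: "complex^4" where "v = vector [v1, v2, v3, v4]"
  have "v \<noteq> 0" using h by (auto simp: v_def vec_eq_iff forall_4)
  moreover have "(\<chi> i j. complex_of_real (matrix (JL b \<epsilon> \<gamma> p) $ i $ j)) *v v = c *s v"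
    unfolding eig_core using h by (simp add: v_def)
  ultimately show ?L unfolding jac real_mat_eigenvalue_def by blast
qed

lemma block:
  fixes c v1 v2 :: complex
  assumes "of_real \<alpha> * v1 - v2 = c * v1" "of_real \<epsilon> * (v1 - of_real b * v2) = c * v2" "v1 \<noteq> 0 \<or> v2 \<noteq> 0"
  shows "c^2 - of_real (\<alpha> - b * \<epsilon>) * c + of_real (\<epsilon> * (1 - \<alpha> * b)) = 0"
proof -
  have v2: "v2 = (of_real \<alpha> - c) * v1" using assms(1) by (simp add: algebra_simps)
  have "v1 \<noteq> 0" using assms(3) v2 by auto
  have "(of_real \<epsilon> * (1 - of_real b * (of_real \<alpha> - c)) - c * (of_real \<alpha> - c)) * v1 = 0"
    using assms(2) unfolding v2 by (simp add: algebra_simps)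
  then have "of_real \<epsilon> * (1 - of_real b * (of_real \<alpha> - c)) - c * (of_real \<alpha> - c) = 0"
    using \<open>v1 \<noteq> 0\<close> by simp
  then show ?thesis by (simp add: algebra_simps power2_eq_square)
qed

lemma quad_sign:
  fixes c :: complex and T D :: real
  assumes "c^2 - of_real T * c + of_real D = 0" "D > 0"
  shows "(Re c > 0 \<longleftrightarrow> T > 0) \<and> (Re c < 0 \<longleftrightarrow> T < 0) \<and> (Re c = 0 \<longleftrightarrow> T = 0)"
proof -
  define x where "x = Re c"
  define y where "y = Im c"
  have re: "x*x - y*y - T*x + D = 0" and im: "2*x*y - T*y = 0"
    using arg_cong[OF assms(1), of Re] arg_cong[OF assms(1), of Im]
    by (simp_all add: x_def y_def power2_eq_square algebra_simps)
  have "(x > 0 \<longleftrightarrow> T > 0) \<and> (x < 0 \<longleftrightarrow> T < 0) \<and> (x = 0 \<longleftrightarrow> T = 0)"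
  proof (cases "y = 0")
    case True
    then have "x * (x - T) = - D" using re by (simp add: algebra_simps)
    then have "x * (x - T) < 0" using assms(2) by simp
    then show ?thesis by (auto simp: mult_less_0_iff)
  next
    case False
    then have "2*x = T" using im by (metis mult.commute right_diff_distrib mult_eq_0_iff eq_iff_diff_eq_0)
    then show ?thesis by auto
  qed
  then show ?thesis by (simp add: x_def)
qed

lemma root_exists:
  fixes T D :: real
  shows "\<exists>c::complex. c^2 - of_real T * c + of_real D = 0"
proof -
  define c :: complex where "c = of_real T / 2 + csqrt (of_real (T^2/4 - D))"
  have "(c - of_real T / 2)^2 = of_real (T^2/4 - D)" by (simp add: c_def)
  then have "4 * (c^2 - of_real T * c + of_real D) = 0"
    by (simp add: power2_eq_square algebra_simps)
  then have "c^2 - of_real T * c + of_real D = 0" by (metis mult_eq_0_iff zero_neq_numeral)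
  then show ?thesis by blast
qed

lemma cube_less: "(y::real) < z \<Longrightarrow> y^3 < z^3"
proof -
  assume yz: "y < z"
  consider "0 \<le> y" | "z \<le> 0" | "y < 0" "0 < z" by linarith
  then show ?thesis
  proof cases
    case 1 then show ?thesis using yz by (intro power_strict_mono) auto
  next
    case 2 then have "(-z)^3 < (-y)^3" using yz by (intro power_strict_mono) auto
    then show ?thesis by simp
  next
    case 3 
    have "y^3 < 0" using 3 by (simp add: power3_eq_cube mult_neg_pos zero_less_mult_iff mult_less_0_iff)
    moreover have "0 < z^3" using 3 by simp
    ultimately show ?thesis by linarith
  qed
qed

lemma cubic_unique:
  fixes k m :: real assumes "k \<le> 0"
  shows "\<exists>!y. m + k*y - y^3/3 = 0"
proof -
  define h where "h y = m + k*y - y^3/3" for y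
  have mono: "h z < h y" if "y < z" for y z
  proof -
    have "y^3 < z^3" using that by (rule cube_less)
    moreover have "k*z \<le> k*y" using that assms by (simp add: mult_left_mono_neg)
    ultimately show ?thesis by (simp add: h_def)
  qed
  define M where "M = \<bar>m\<bar> + 3"
  have M: "M \<ge> 3" "M > \<bar>m\<bar>" by (auto simp: M_def)
  have "M*M \<ge> 3*3" using M by (intro mult_mono) auto
  then have "M*(M*M) \<ge> M*9" using M by (intro mult_left_mono) auto
  then have M3: "M^3 \<ge> 9 * M" by (simp add: power3_eq_cube mult.commute)
  have "k * M \<le> 0" using assms M by (simp add: mult_nonpos_nonneg)
  then have hM: "h M \<le> 0" using M M3 by (simp add: h_def)
  have "(-M)^3 = - (M^3)" by simp
  then have hm: "h (-M) \<ge> 0" using M M3 \<open>k * M \<le> 0\<close> by (simp add: h_def)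
  have "continuous_on {-M..M} h" unfolding h_def by (intro continuous_intros) auto
  then obtain y where "h y = 0" using IVT2'[of h M 0 "-M"] hM hm M by auto
  moreover have "z = y" if "h z = 0" for z
    using mono[of y z] mono[of z y] that \<open>h y = 0\<close> by (cases "y < z"; cases "z < y") auto
  ultimately show ?thesis unfolding h_def by blast
qed

lemma eig_to_q:
  fixes c v1 v2 v3 v4 :: complex
  assumes "v1 \<noteq> 0 \<or> v2 \<noteq> 0 \<or> v3 \<noteq> 0 \<or> v4 \<noteq> 0"
    "of_real \<alpha>1 * v1 - v2 = c * v1" "of_real \<epsilon> * (v1 - of_real b * v2) = c * v2"
    "of_real \<gamma> * v1 + of_real \<alpha>3 * v3 - v4 = c * v3" "of_real \<epsilon> * (v3 - of_real b * v4) = c * v4"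
  shows "c^2 - of_real (\<alpha>1 - b * \<epsilon>) * c + of_real (\<epsilon> * (1 - \<alpha>1 * b)) = 0 \<or>
         c^2 - of_real (\<alpha>3 - b * \<epsilon>) * c + of_real (\<epsilon> * (1 - \<alpha>3 * b)) = 0"
proof (cases "v1 \<noteq> 0 \<or> v2 \<noteq> 0")
  case True
  then show ?thesis using block[OF assms(2,3)] by blast
next
  case False
  then have "of_real \<alpha>3 * v3 - v4 = c * v3" "v3 \<noteq> 0 \<or> v4 \<noteq> 0" using assms(1,4) by auto
  then show ?thesis using block[OF _ assms(5)] by blast
qed

lemma eig_from_B:
  fixes c :: complex
  assumes "c^2 - of_real (\<alpha>3 - b * \<epsilon>) * c + of_real (\<epsilon> * (1 - \<alpha>3 * b)) = 0"
  shows "\<exists>v1 v2 v3 v4 :: complex. (v1 \<noteq> 0 \<or> v2 \<noteq> 0 \<or> v3 \<noteq> 0 \<or> v4 \<noteq> 0) \<and>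
    of_real \<alpha>1 * v1 - v2 = c * v1 \<and> of_real \<epsilon> * (v1 - of_real b * v2) = c * v2 \<and>
    of_real \<gamma> * v1 + of_real \<alpha>3 * v3 - v4 = c * v3 \<and> of_real \<epsilon> * (v3 - of_real b * v4) = c * v4"
proof -
  have "of_real \<epsilon> * (1 - of_real b * (of_real \<alpha>3 - c)) = c * (of_real \<alpha>3 - c)"
    using assms by (simp add: algebra_simps power2_eq_square)
  then show ?thesis
    by (intro exI[of _ 0] exI[of _ 1] exI[of _ "of_real \<alpha>3 - c"]) (simp add: algebra_simps)
qed

lemma eig_from_A:
  fixes c :: complex
  assumes "c^2 - of_real (\<alpha>1 - b * \<epsilon>) * c + of_real (\<epsilon> * (1 - \<alpha>1 * b)) = 0"
    and q: "c^2 - of_real (\<alpha>3 - b * \<epsilon>) * c + of_real (\<epsilon> * (1 - \<alpha>3 * b)) \<noteq> 0"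
  shows "\<exists>v1 v2 v3 v4 :: complex. (v1 \<noteq> 0 \<or> v2 \<noteq> 0 \<or> v3 \<noteq> 0 \<or> v4 \<noteq> 0) \<and>
    of_real \<alpha>1 * v1 - v2 = c * v1 \<and> of_real \<epsilon> * (v1 - of_real b * v2) = c * v2 \<and>
    of_real \<gamma> * v1 + of_real \<alpha>3 * v3 - v4 = c * v3 \<and> of_real \<epsilon> * (v3 - of_real b * v4) = c * v4"
proof -
  define Q where "Q = c^2 - of_real (\<alpha>3 - b * \<epsilon>) * c + of_real (\<epsilon> * (1 - \<alpha>3 * b))"
  have Q: "Q \<noteq> 0" using q by (simp add: Q_def)
  define v3 where "v3 = (c + of_real b * of_real \<epsilon>) * of_real \<gamma> / Q"
  define v4 where "v4 = of_real \<epsilon> * of_real \<gamma> / Q"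
  have e2: "of_real \<epsilon> * (1 - of_real b * (of_real \<alpha>1 - c)) = c * (of_real \<alpha>1 - c)"
    using assms(1) by (simp add: algebra_simps power2_eq_square)
  have e3: "of_real \<gamma> * 1 + of_real \<alpha>3 * v3 - v4 = c * v3"
  proof -
    have n: "(c - of_real \<alpha>3) * ((c + of_real b * of_real \<epsilon>) * of_real \<gamma>) + of_real \<epsilon> * of_real \<gamma> = Q * of_real \<gamma>"
      by (simp add: Q_def algebra_simps power2_eq_square)
    have "(c - of_real \<alpha>3) * v3 + v4 = ((c - of_real \<alpha>3) * ((c + of_real b * of_real \<epsilon>) * of_real \<gamma>) + of_real \<epsilon> * of_real \<gamma>) / Q"
      unfolding v3_def v4_def by (simp add: add_divide_distrib)
    also have "\<dots> = Q * of_real \<gamma> / Q" by (simp only: n)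
    also have "\<dots> = of_real \<gamma>" using Q by simp
    finally show ?thesis by (simp add: algebra_simps)
  qed
  have e4: "of_real \<epsilon> * (v3 - of_real b * v4) = c * v4"
    unfolding v3_def v4_def using Q by (simp add: field_simps)
  show ?thesis
    by (rule exI[of _ 1], rule exI[of _ "of_real \<alpha>1 - c"], rule exI[of _ v3], rule exI[of _ v4])
       (use e2 e3 e4 in simp)
qed

lemma eq_iff:
  assumes "0 < b" "0 < \<epsilon>"
  shows "equilibrium (fn2_field a b \<epsilon> I \<gamma>) p \<longleftrightarrow>
    ((I - a) + (1 - 1/b) * p$1 - (p$1)^3/3 = 0 \<and> p$2 = p$1 / b \<and>
     (\<gamma> * p$1 - a) + (1 - 1/b - \<gamma>) * p$3 - (p$3)^3/3 = 0 \<and> p$4 = p$3 / b)"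
proof -
  have "equilibrium (fn2_field a b \<epsilon> I \<gamma>) p \<longleftrightarrow>
    (p$1 - (p$1)^3/3 - a - p$2 + I = 0 \<and> p$1 - b * p$2 = 0 \<and>
     p$3 - (p$3)^3/3 - a - p$4 + \<gamma> * (p$1 - p$3) = 0 \<and> p$3 - b * p$4 = 0)"
    unfolding equilibrium_def fn2_field_def using assms by (simp add: vec_eq_iff forall_4)
  also have "\<dots> \<longleftrightarrow> ((I - a) + (1 - 1/b) * p$1 - (p$1)^3/3 = 0 \<and> p$2 = p$1 / b \<and>
     (\<gamma> * p$1 - a) + (1 - 1/b - \<gamma>) * p$3 - (p$3)^3/3 = 0 \<and> p$4 = p$3 / b)"
  proof -
    have e2: "p$1 - b*p$2 = 0 \<longleftrightarrow> p$2 = p$1/b" and e4: "p$3 - b*p$4 = 0 \<longleftrightarrow> p$4 = p$3/b"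
      using assms by (auto simp: field_simps)
    have x: "p$1 - (p$1)^3/3 - a - p$1/b + I = (I - a) + (1 - 1/b) * p$1 - (p$1)^3/3"
      "p$3 - (p$3)^3/3 - a - p$3/b + \<gamma> * (p$1 - p$3) = (\<gamma> * p$1 - a) + (1 - 1/b - \<gamma>) * p$3 - (p$3)^3/3"
      by (simp_all add: algebra_simps)
    show ?thesis unfolding e2 e4 using x by auto
  qed
  finally show ?thesis .
qed
theorem proposition3:
  fixes a b \<epsilon> I \<gamma> :: real
  assumes "0 < a" "a < 1" "0 < b" "b < 1" "0 < \<epsilon>" "0 \<le> \<gamma>"
  shows "(\<exists>!p. equilibrium (fn2_field a b \<epsilon> I \<gamma>) p) \<and>
    (\<forall>p. equilibrium (fn2_field a b \<epsilon> I \<gamma>) p \<longrightarrow>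
      (let F = fn2_field a b \<epsilon> I \<gamma>;
           \<sigma>\<^sub>1 = 1 - b * \<epsilon> - (p$1)^2;
           \<sigma>\<^sub>2 = 1 - b * \<epsilon> - \<gamma> - (p$3)^2
       in ((\<sigma>\<^sub>1 = 0 \<or> \<sigma>\<^sub>2 = 0) \<longrightarrow> nonhyperbolic_eq F p) \<and>
          ((\<sigma>\<^sub>1 \<noteq> 0 \<and> \<sigma>\<^sub>2 \<noteq> 0) \<longrightarrow>
             hyperbolic_eq F p \<and>
             (\<sigma>\<^sub>1 < 0 \<and> \<sigma>\<^sub>2 < 0 \<longrightarrow> attracting_eq F p) \<and>
             (\<sigma>\<^sub>1 > 0 \<and> \<sigma>\<^sub>2 > 0 \<longrightarrow> repelling_eq F p) \<and>
             (\<sigma>\<^sub>1 * \<sigma>\<^sub>2 < 0 \<longrightarrow> saddle_eq F p))))"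
proof -
  let ?F = "fn2_field a b \<epsilon> I \<gamma>"
  have b0: "0 < b" and e0: "0 < \<epsilon>" using assms by auto
  have kA: "1 - 1/b \<le> 0" using assms by (simp add: field_simps)
  have ex1: "\<exists>!p. equilibrium ?F p"
  proof -
    obtain y1 where h1: "(I - a) + (1 - 1/b)*y1 - y1^3/3 = 0"
      and u1: "\<And>y. (I - a) + (1 - 1/b)*y - y^3/3 = 0 \<Longrightarrow> y = y1"
      using cubic_unique[OF kA, of "I - a"] by blast
    have kB: "1 - 1/b - \<gamma> \<le> 0" using kA assms by linarith
    obtain y3 where h3: "(\<gamma> * y1 - a) + (1 - 1/b - \<gamma>)*y3 - y3^3/3 = 0"
      and u3: "\<And>y. (\<gamma> * y1 - a) + (1 - 1/b - \<gamma>)*y - y^3/3 = 0 \<Longrightarrow> y = y3"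
      using cubic_unique[OF kB, of "\<gamma> * y1 - a"] by blast
    show ?thesis
    proof (rule ex1I[of _ "vector [y1, y1/b, y3, y3/b]"])
      show "equilibrium ?F (vector [y1, y1/b, y3, y3/b])"
        unfolding eq_iff[OF b0 e0] using h1 h3 by simp
    next
      fix p assume "equilibrium ?F p"
      then have e: "(I - a) + (1 - 1/b) * p$1 - (p$1)^3/3 = 0 \<and> p$2 = p$1 / b \<and>
        (\<gamma> * p$1 - a) + (1 - 1/b - \<gamma>) * p$3 - (p$3)^3/3 = 0 \<and> p$4 = p$3 / b"
        unfolding eq_iff[OF b0 e0] .
      then have p1: "p$1 = y1" using u1 by blast
      then have p3: "p$3 = y3" using u3 e by auto
      show "p = vector [y1, y1/b, y3, y3/b]" using e p1 p3 by (simp add: vec_eq_iff forall_4)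
    qed
  qed
  moreover have "\<forall>p. equilibrium ?F p \<longrightarrow>
      (let F = ?F;
           \<sigma>\<^sub>1 = 1 - b * \<epsilon> - (p$1)^2;
           \<sigma>\<^sub>2 = 1 - b * \<epsilon> - \<gamma> - (p$3)^2
       in ((\<sigma>\<^sub>1 = 0 \<or> \<sigma>\<^sub>2 = 0) \<longrightarrow> nonhyperbolic_eq F p) \<and>
          ((\<sigma>\<^sub>1 \<noteq> 0 \<and> \<sigma>\<^sub>2 \<noteq> 0) \<longrightarrow>
             hyperbolic_eq F p \<and>
             (\<sigma>\<^sub>1 < 0 \<and> \<sigma>\<^sub>2 < 0 \<longrightarrow> attracting_eq F p) \<and>
             (\<sigma>\<^sub>1 > 0 \<and> \<sigma>\<^sub>2 > 0 \<longrightarrow> repelling_eq F p) \<and>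
             (\<sigma>\<^sub>1 * \<sigma>\<^sub>2 < 0 \<longrightarrow> saddle_eq F p)))"
  proof (intro allI impI)
    fix p assume eqp: "equilibrium ?F p"
    define \<alpha>1 where "\<alpha>1 = 1 - (p$1)^2"
    define \<alpha>3 where "\<alpha>3 = 1 - \<gamma> - (p$3)^2"
    define s1 where "s1 = 1 - b * \<epsilon> - (p$1)^2"
    define s2 where "s2 = 1 - b * \<epsilon> - \<gamma> - (p$3)^2"
    have s1': "\<alpha>1 - b * \<epsilon> = s1" and s2': "\<alpha>3 - b * \<epsilon> = s2"
      by (simp_all add: \<alpha>1_def \<alpha>3_def s1_def s2_def)
    define D1 where "D1 = \<epsilon> * (1 - \<alpha>1 * b)"
    define D2 where "D2 = \<epsilon> * (1 - \<alpha>3 * b)"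
    have "\<alpha>1 * b \<le> 1 * b" using b0 by (intro mult_right_mono) (auto simp: \<alpha>1_def)
    then have "1 - \<alpha>1 * b > 0" using assms by linarith
    then have D1: "D1 > 0" using e0 by (simp add: D1_def)
    have "0 \<le> (p$3)^2" by simp
    then have "\<alpha>3 \<le> 1" using assms unfolding \<alpha>3_def by linarith
    then have "\<alpha>3 * b \<le> 1 * b" using b0 by (intro mult_right_mono) auto
    then have "1 - \<alpha>3 * b > 0" using assms by linarith
    then have D2: "D2 > 0" using e0 by (simp add: D2_def)
    define qA where "qA c = c^2 - of_real s1 * c + of_real D1" for c :: complex
    define qB where "qB c = c^2 - of_real s2 * c + of_real D2" for c :: complex
    have eig: "real_mat_eigenvalue (jacobian_at ?F p) c \<longleftrightarrow>
      (\<exists>v1 v2 v3 v4 :: complex. (v1 \<noteq> 0 \<or> v2 \<noteq> 0 \<or> v3 \<noteq> 0 \<or> v4 \<noteq> 0) \<and>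
        of_real \<alpha>1 * v1 - v2 = c * v1 \<and> of_real \<epsilon> * (v1 - of_real b * v2) = c * v2 \<and>
        of_real \<gamma> * v1 + of_real \<alpha>3 * v3 - v4 = c * v3 \<and> of_real \<epsilon> * (v3 - of_real b * v4) = c * v4)" for c
      unfolding eig_iff \<alpha>1_def \<alpha>3_def ..
    have toq: "qA c = 0 \<or> qB c = 0" if "real_mat_eigenvalue (jacobian_at ?F p) c" for c
      using that unfolding eig qA_def qB_def D1_def D2_def s1'[symmetric] s2'[symmetric]
      using eig_to_q by blast
    have fromB: "real_mat_eigenvalue (jacobian_at ?F p) c" if "qB c = 0" for c
      unfolding eig using that unfolding qB_def D2_def s2'[symmetric] by (rule eig_from_B)
    have fromA: "real_mat_eigenvalue (jacobian_at ?F p) c" if "qA c = 0" "qB c \<noteq> 0" for c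
      unfolding eig using that unfolding qA_def qB_def D1_def D2_def s1'[symmetric] s2'[symmetric]
      by (rule eig_from_A)
    have sA: "(Re c > 0 \<longleftrightarrow> s1 > 0) \<and> (Re c < 0 \<longleftrightarrow> s1 < 0) \<and> (Re c = 0 \<longleftrightarrow> s1 = 0)" if "qA c = 0" for c
      using quad_sign[OF _ D1] that unfolding qA_def by blast
    have sB: "(Re c > 0 \<longleftrightarrow> s2 > 0) \<and> (Re c < 0 \<longleftrightarrow> s2 < 0) \<and> (Re c = 0 \<longleftrightarrow> s2 = 0)" if "qB c = 0" for c
      using quad_sign[OF _ D2] that unfolding qB_def by blast
    obtain cA where cA: "qA cA = 0" using root_exists unfolding qA_def by blast
    obtain cB where cB: "qB cB = 0" using root_exists unfolding qB_def by blast
    have diff: "?F differentiable (at p)" using deriv unfolding differentiable_def by blast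
    have nh: "nonhyperbolic_eq ?F p" if "s1 = 0 \<or> s2 = 0"
    proof -
      have "\<exists>c. real_mat_eigenvalue (jacobian_at ?F p) c \<and> Re c = 0"
      proof (cases "s2 = 0")
        case True then show ?thesis using fromB[OF cB] sB[OF cB] by blast
      next
        case False
        then have "s1 = 0" using that by blast
        have "qB cA \<noteq> 0" using sA[OF cA] sB \<open>s1 = 0\<close> False by blast
        then show ?thesis using fromA[OF cA] sA[OF cA] \<open>s1 = 0\<close> by blast
      qed
      then show ?thesis unfolding nonhyperbolic_eq_def using eqp diff by blast
    qed
    have hyp: "hyperbolic_eq ?F p" if "s1 \<noteq> 0" "s2 \<noteq> 0"
      unfolding hyperbolic_eq_def using eqp diff toq sA sB that by blast
    have att: "attracting_eq ?F p" if "s1 < 0" "s2 < 0"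
      unfolding attracting_eq_def using eqp diff toq sA sB that by blast
    have rep: "repelling_eq ?F p" if "s1 > 0" "s2 > 0"
      unfolding repelling_eq_def using eqp diff toq sA sB that by blast
    have sad: "saddle_eq ?F p" if "s1 * s2 < 0"
    proof -
      have ne: "s1 \<noteq> 0" "s2 \<noteq> 0" using that by auto
      have sg: "(s1 < 0 \<and> s2 > 0) \<or> (s1 > 0 \<and> s2 < 0)" using that by (auto simp: mult_less_0_iff)
      have "qB cA \<noteq> 0" using sA[OF cA] sB sg by (metis less_asym)
      then have eA: "real_mat_eigenvalue (jacobian_at ?F p) cA" using fromA[OF cA] by blast
      have eB: "real_mat_eigenvalue (jacobian_at ?F p) cB" using fromB[OF cB] .
      show ?thesis unfolding saddle_eq_def using hyp[OF ne] eA eB sA[OF cA] sB[OF cB] sg by blast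
    qed
    show "let F = ?F;
           \<sigma>\<^sub>1 = 1 - b * \<epsilon> - (p$1)^2;
           \<sigma>\<^sub>2 = 1 - b * \<epsilon> - \<gamma> - (p$3)^2
       in ((\<sigma>\<^sub>1 = 0 \<or> \<sigma>\<^sub>2 = 0) \<longrightarrow> nonhyperbolic_eq F p) \<and>
          ((\<sigma>\<^sub>1 \<noteq> 0 \<and> \<sigma>\<^sub>2 \<noteq> 0) \<longrightarrow>
             hyperbolic_eq F p \<and>
             (\<sigma>\<^sub>1 < 0 \<and> \<sigma>\<^sub>2 < 0 \<longrightarrow> attracting_eq F p) \<and>
             (\<sigma>\<^sub>1 > 0 \<and> \<sigma>\<^sub>2 > 0 \<longrightarrow> repelling_eq F p) \<and>
             (\<sigma>\<^sub>1 * \<sigma>\<^sub>2 < 0 \<longrightarrow> saddle_eq F p))"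
      unfolding Let_def s1_def[symmetric] s2_def[symmetric] using nh hyp att rep sad by blast
  qed
  ultimately show ?thesis by blast
qed

end
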